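(* Let $X,Y$ be presheaves of sets on $\mathscr{V}_f$ such that $X$ takes values in finite sets and $Y$ is finite. Then the set of natural transformations $\mathrm{Hom}(X,Y)$ is finite.
   Context: $p$ prime, $\mathbb{F}=\mathbb{F}_p$, $\mathscr{V}_f$ finite-dimensional $\mathbb{F}$-vector spaces; presheaves are contravariant functors $\mathscr{V}_f\to$ Sets. A presheaf $Y$ is finite if there is a monomorphism $Y\hookrightarrow F_Y$ of presheaves of sets with $F_Y$ a functor $\mathscr{V}_f^{\mathrm{op}}\to$ ($\mathbb{F}$-vector spaces) having a finite composition series. *)

theory Defs
  imports Main "HOL-Computational_Algebra.Primes"
begin

(* Skeleton of V_f: object n stands for F_p^n. A morphism F_p^m -> F_p^n is an
   n x m matrix with entries in {0..<p}, zero outside the index range. *)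
type_synonym mat = "nat \<Rightarrow> nat \<Rightarrow> nat"

definition is_mor :: "nat \<Rightarrow> nat \<Rightarrow> nat \<Rightarrow> mat \<Rightarrow> bool" where
  "is_mor p m n A \<longleftrightarrow>
     (\<forall>i j. (i < n \<and> j < m \<longrightarrow> A i j < p) \<and> (\<not> (i < n \<and> j < m) \<longrightarrow> A i j = 0))"

definition mat_comp :: "nat \<Rightarrow> nat \<Rightarrow> mat \<Rightarrow> mat \<Rightarrow> mat" where
  "mat_comp p m A B = (\<lambda>i j. (\<Sum>k<m. A i k * B k j) mod p)"

definition mat_id :: "nat \<Rightarrow> mat" where
  "mat_id n = (\<lambda>i j. if i < n \<and> i = j then 1 else 0)"

(* A presheaf of sets: Xo n = X(F^n); for f : F^m -> F^n, Xa m n f : X(F^n) -> X(F^m). *)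
definition presheaf :: "nat \<Rightarrow> (nat \<Rightarrow> 'a set) \<Rightarrow> (nat \<Rightarrow> nat \<Rightarrow> mat \<Rightarrow> 'a \<Rightarrow> 'a) \<Rightarrow> bool" where
  "presheaf p Xo Xa \<longleftrightarrow>
     (\<forall>m n f x. is_mor p m n f \<and> x \<in> Xo n \<longrightarrow> Xa m n f x \<in> Xo m) \<and>
     (\<forall>n x. x \<in> Xo n \<longrightarrow> Xa n n (mat_id n) x = x) \<and>
     (\<forall>l m n f g x. is_mor p l m f \<and> is_mor p m n g \<and> x \<in> Xo n \<longrightarrow>
        Xa l n (mat_comp p m g f) x = Xa l m f (Xa m n g x))"

definition nat_trans ::
  "nat \<Rightarrow> (nat \<Rightarrow> 'a set) \<Rightarrow> (nat \<Rightarrow> nat \<Rightarrow> mat \<Rightarrow> 'a \<Rightarrow> 'a) \<Rightarrow>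
   (nat \<Rightarrow> 'b set) \<Rightarrow> (nat \<Rightarrow> nat \<Rightarrow> mat \<Rightarrow> 'b \<Rightarrow> 'b) \<Rightarrow> (nat \<Rightarrow> 'a \<Rightarrow> 'b) \<Rightarrow> bool" where
  "nat_trans p Xo Xa Yo Ya \<eta> \<longleftrightarrow>
     (\<forall>n x. x \<in> Xo n \<longrightarrow> \<eta> n x \<in> Yo n) \<and>
     (\<forall>m n f x. is_mor p m n f \<and> x \<in> Xo n \<longrightarrow> \<eta> m (Xa m n f x) = Ya m n f (\<eta> n x))"

(* Hom(X,Y): natural transformations, taken extensional (undefined off the carriers) *)
definition Hom ::
  "nat \<Rightarrow> (nat \<Rightarrow> 'a set) \<Rightarrow> (nat \<Rightarrow> nat \<Rightarrow> mat \<Rightarrow> 'a \<Rightarrow> 'a) \<Rightarrow>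
   (nat \<Rightarrow> 'b set) \<Rightarrow> (nat \<Rightarrow> nat \<Rightarrow> mat \<Rightarrow> 'b \<Rightarrow> 'b) \<Rightarrow> (nat \<Rightarrow> 'a \<Rightarrow> 'b) set" where
  "Hom p Xo Xa Yo Ya =
     {\<eta>. nat_trans p Xo Xa Yo Ya \<eta> \<and> (\<forall>n x. x \<notin> Xo n \<longrightarrow> \<eta> n x = undefined)}"

(* F_p-vector space on carrier V; scalars are represented by {0..<p} *)
definition vspace :: "nat \<Rightarrow> 'v set \<Rightarrow> ('v \<Rightarrow> 'v \<Rightarrow> 'v) \<Rightarrow> 'v \<Rightarrow> (nat \<Rightarrow> 'v \<Rightarrow> 'v) \<Rightarrow> bool" where
  "vspace p V add z sm \<longleftrightarrow>
     z \<in> V \<and> (\<forall>x\<in>V. \<forall>y\<in>V. add x y \<in> V) \<and> (\<forall>a<p. \<forall>x\<in>V. sm a x \<in> V) \<and>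
     (\<forall>x\<in>V. \<forall>y\<in>V. \<forall>w\<in>V. add (add x y) w = add x (add y w)) \<and>
     (\<forall>x\<in>V. \<forall>y\<in>V. add x y = add y x) \<and>
     (\<forall>x\<in>V. add z x = x) \<and>
     (\<forall>x\<in>V. \<exists>y\<in>V. add x y = z) \<and>
     (\<forall>a<p. \<forall>x\<in>V. \<forall>y\<in>V. sm a (add x y) = add (sm a x) (sm a y)) \<and>
     (\<forall>a<p. \<forall>b<p. \<forall>x\<in>V. sm ((a + b) mod p) x = add (sm a x) (sm b x)) \<and>
     (\<forall>a<p. \<forall>b<p. \<forall>x\<in>V. sm ((a * b) mod p) x = sm a (sm b x)) \<and>
     (\<forall>x\<in>V. sm 1 x = x)"

definition vs_presheaf ::
  "nat \<Rightarrow> (nat \<Rightarrow> 'v set) \<Rightarrow> (nat \<Rightarrow> nat \<Rightarrow> mat \<Rightarrow> 'v \<Rightarrow> 'v) \<Rightarrow>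
   ('v \<Rightarrow> 'v \<Rightarrow> 'v) \<Rightarrow> (nat \<Rightarrow> 'v) \<Rightarrow> (nat \<Rightarrow> 'v \<Rightarrow> 'v) \<Rightarrow> bool" where
  "vs_presheaf p Fo Fa add z sm \<longleftrightarrow>
     presheaf p Fo Fa \<and> (\<forall>n. vspace p (Fo n) add (z n) sm) \<and>
     (\<forall>m n f. is_mor p m n f \<longrightarrow>
        (\<forall>x\<in>Fo n. \<forall>y\<in>Fo n. Fa m n f (add x y) = add (Fa m n f x) (Fa m n f y)) \<and>
        (\<forall>a<p. \<forall>x\<in>Fo n. Fa m n f (sm a x) = sm a (Fa m n f x)))"

definition subfunctor ::
  "nat \<Rightarrow> (nat \<Rightarrow> 'v set) \<Rightarrow> (nat \<Rightarrow> nat \<Rightarrow> mat \<Rightarrow> 'v \<Rightarrow> 'v) \<Rightarrow>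
   ('v \<Rightarrow> 'v \<Rightarrow> 'v) \<Rightarrow> (nat \<Rightarrow> 'v) \<Rightarrow> (nat \<Rightarrow> 'v \<Rightarrow> 'v) \<Rightarrow> (nat \<Rightarrow> 'v set) \<Rightarrow> bool" where
  "subfunctor p Fo Fa add z sm G \<longleftrightarrow>
     (\<forall>n. G n \<subseteq> Fo n \<and> z n \<in> G n \<and> (\<forall>x\<in>G n. \<forall>y\<in>G n. add x y \<in> G n) \<and>
          (\<forall>a<p. \<forall>x\<in>G n. sm a x \<in> G n)) \<and>
     (\<forall>m n f x. is_mor p m n f \<and> x \<in> G n \<longrightarrow> Fa m n f x \<in> G m)"

(* finite composition series 0 = G_0 < G_1 < ... < G_k = F with simple quotients,
   i.e. no subfunctor strictly between consecutive terms *)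
definition has_comp_series ::
  "nat \<Rightarrow> (nat \<Rightarrow> 'v set) \<Rightarrow> (nat \<Rightarrow> nat \<Rightarrow> mat \<Rightarrow> 'v \<Rightarrow> 'v) \<Rightarrow>
   ('v \<Rightarrow> 'v \<Rightarrow> 'v) \<Rightarrow> (nat \<Rightarrow> 'v) \<Rightarrow> (nat \<Rightarrow> 'v \<Rightarrow> 'v) \<Rightarrow> bool" where
  "has_comp_series p Fo Fa add z sm \<longleftrightarrow>
     (\<exists>Gs. Gs \<noteq> [] \<and> (\<forall>G\<in>set Gs. subfunctor p Fo Fa add z sm G) \<and>
        hd Gs = (\<lambda>n. {z n}) \<and> last Gs = Fo \<and>
        (\<forall>i. Suc i < length Gs \<longrightarrow> Gs ! i < Gs ! Suc i \<and>
           \<not> (\<exists>H. subfunctor p Fo Fa add z sm H \<and> Gs ! i < H \<and> H < Gs ! Suc i)))"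

(* Y is finite: monomorphism of presheaves of sets Y -> F_Y with F_Y a vector-space
   valued functor with a finite composition series (F_Y valued in type 'v) *)
definition finite_presheaf ::
  "'v itself \<Rightarrow> nat \<Rightarrow> (nat \<Rightarrow> 'b set) \<Rightarrow> (nat \<Rightarrow> nat \<Rightarrow> mat \<Rightarrow> 'b \<Rightarrow> 'b) \<Rightarrow> bool" where
  "finite_presheaf (_ :: 'v itself) p Yo Ya \<longleftrightarrow>
     (\<exists>(Fo :: nat \<Rightarrow> 'v set) Fa add z sm \<iota>.
        vs_presheaf p Fo Fa add z sm \<and> has_comp_series p Fo Fa add z sm \<and>
        nat_trans p Yo Ya Fo Fa \<iota> \<and> (\<forall>n. inj_on (\<iota> n) (Yo n)))"

end

theory Submission imports Defs "HOL-Library.FuncSet" begin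

lemma vs_z: "vspace p V add z sm \<Longrightarrow> z \<in> V" unfolding vspace_def by (elim conjE) blast
lemma vs_add: "vspace p V add z sm \<Longrightarrow> x\<in>V \<Longrightarrow> y\<in>V \<Longrightarrow> add x y \<in> V" unfolding vspace_def by (elim conjE) blast
lemma vs_sm: "vspace p V add z sm \<Longrightarrow> a<p \<Longrightarrow> x\<in>V \<Longrightarrow> sm a x \<in> V" unfolding vspace_def by (elim conjE) blast
lemma vs_assoc: "vspace p V add z sm \<Longrightarrow> x\<in>V \<Longrightarrow> y\<in>V \<Longrightarrow> w\<in>V \<Longrightarrow> add (add x y) w = add x (add y w)" unfolding vspace_def by (elim conjE) blast
lemma vs_comm: "vspace p V add z sm \<Longrightarrow> x\<in>V \<Longrightarrow> y\<in>V \<Longrightarrow> add x y = add y x" unfolding vspace_def by (elim conjE) blast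
lemma vs_lid: "vspace p V add z sm \<Longrightarrow> x\<in>V \<Longrightarrow> add z x = x" unfolding vspace_def by (elim conjE) blast
lemma vs_rid: "vspace p V add z sm \<Longrightarrow> x\<in>V \<Longrightarrow> add x z = x" by (metis vs_comm vs_lid vs_z)
lemma vs_inv: "vspace p V add z sm \<Longrightarrow> x\<in>V \<Longrightarrow> \<exists>y\<in>V. add x y = z" unfolding vspace_def by (elim conjE) blast
lemma vs_smadd: "vspace p V add z sm \<Longrightarrow> a<p \<Longrightarrow> x\<in>V \<Longrightarrow> y\<in>V \<Longrightarrow> sm a (add x y) = add (sm a x) (sm a y)" unfolding vspace_def by (elim conjE) blast
lemma vs_addsm: "vspace p V add z sm \<Longrightarrow> a<p \<Longrightarrow> b<p \<Longrightarrow> x\<in>V \<Longrightarrow> sm ((a+b) mod p) x = add (sm a x) (sm b x)" unfolding vspace_def by (elim conjE) blast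
lemma vs_mulsm: "vspace p V add z sm \<Longrightarrow> a<p \<Longrightarrow> b<p \<Longrightarrow> x\<in>V \<Longrightarrow> sm ((a*b) mod p) x = sm a (sm b x)" unfolding vspace_def by (elim conjE) blast
lemma vs_one: "vspace p V add z sm \<Longrightarrow> x\<in>V \<Longrightarrow> sm 1 x = x" unfolding vspace_def by auto

lemma vs_idem: assumes V: "vspace p V add z sm" and x: "x\<in>V" and e: "add x x = x" shows "x = z"
proof -
  obtain y where y: "y\<in>V" "add x y = z" using vs_inv[OF V x] by blast
  have "z = add (add x x) y" using e y by simp
  also have "\<dots> = add x (add x y)" using vs_assoc[OF V x x y(1)] .
  also have "\<dots> = x" using y vs_rid[OF V x] by simp
  finally show ?thesis by simp
qed

lemma vs_smz: assumes V: "vspace p V add z sm" and a: "a<p" shows "sm a z = z"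
proof -
  have "sm a z = sm a (add z z)" using vs_lid[OF V vs_z[OF V]] by simp
  also have "\<dots> = add (sm a z) (sm a z)" using vs_smadd[OF V a vs_z[OF V] vs_z[OF V]] .
  finally show ?thesis using vs_idem[OF V vs_sm[OF V a vs_z[OF V]]] by simp
qed

lemma vs_zsm: assumes V: "vspace p V add z sm" and p: "0<p" and x: "x\<in>V" shows "sm 0 x = z"
proof -
  have "sm 0 x = sm ((0+0) mod p) x" by simp
  also have "\<dots> = add (sm 0 x) (sm 0 x)" using vs_addsm[OF V p p x] .
  finally show ?thesis using vs_idem[OF V vs_sm[OF V p x]] by simp
qed

lemma vs_cancel: assumes V: "vspace p V add z sm" and u: "u\<in>V" and v: "v\<in>V" and w: "w\<in>V"
  and vw: "add v w = z" and uw: "add u w = z" shows "u = v"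
proof -
  have "u = add u (add w v)" using vw vs_comm[OF V v w] vs_rid[OF V u] by simp
  also have "\<dots> = add (add u w) v" using vs_assoc[OF V u w v] by simp
  also have "\<dots> = v" using uw vs_lid[OF V v] by simp
  finally show ?thesis .
qed

lemma vs_swap: assumes V: "vspace p V add z sm" and "a\<in>V" "b\<in>V" "c\<in>V" "d\<in>V"
  shows "add (add a b) (add c d) = add (add a c) (add b d)"
proof -
  have "add (add a b) (add c d) = add a (add b (add c d))" using assms by (simp add: vs_assoc vs_add)
  also have "add b (add c d) = add c (add b d)"
  proof -
    have "add b (add c d) = add (add b c) d" using assms by (simp add: vs_assoc)
    also have "add b c = add c b" using assms by (simp add: vs_comm)
    also have "add (add c b) d = add c (add b d)" using assms by (simp add: vs_assoc)
    finally show ?thesis .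
  qed
  also have "add a (add c (add b d)) = add (add a c) (add b d)" using assms by (simp add: vs_assoc vs_add)
  finally show ?thesis .
qed

fun spl :: "nat \<Rightarrow> ('v\<Rightarrow>'v\<Rightarrow>'v) \<Rightarrow> 'v \<Rightarrow> (nat\<Rightarrow>'v\<Rightarrow>'v) \<Rightarrow> 'v list \<Rightarrow> 'v set" where
  "spl p add z sm [] = {z}"
| "spl p add z sm (v#vs) = {add (sm a v) w | a w. a < p \<and> w \<in> spl p add z sm vs}"

lemma spl_finite: "finite (spl p add z sm vs)"
proof (induction vs)
  case Nil then show ?case by simp
next
  case (Cons v vs)
  have "spl p add z sm (v#vs) = (\<lambda>(a,w). add (sm a v) w) ` ({..<p} \<times> spl p add z sm vs)" by auto
  then show ?case using Cons by simp
qed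

context
  fixes p V add z sm assumes V: "vspace p V add z sm" and p: "1 < p"
begin

lemma spl_sub: "set vs \<subseteq> V \<Longrightarrow> spl p add z sm vs \<subseteq> V"
  by (induction vs) (auto simp: vs_z[OF V] vs_add[OF V] vs_sm[OF V])

lemma spl_z: "set vs \<subseteq> V \<Longrightarrow> z \<in> spl p add z sm vs"
proof (induction vs)
  case Nil then show ?case by simp
next
  case (Cons v vs)
  have "z = add (sm 0 v) z" using vs_zsm[OF V _ ] Cons.prems p vs_lid[OF V vs_z[OF V]] by auto
  then show ?case using Cons p by fastforce
qed

lemma spl_mem: "set vs \<subseteq> V \<Longrightarrow> v \<in> set vs \<Longrightarrow> v \<in> spl p add z sm vs"
proof (induction vs)
  case Nil then show ?case by simp
next
  case (Cons u vs)
  show ?case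
  proof (cases "v = u")
    case True
    have "v = add (sm 1 u) z" using True Cons.prems vs_one[OF V] vs_rid[OF V] by auto
    then show ?thesis using spl_z[of vs] Cons.prems p by fastforce
  next
    case False
    then have w: "v \<in> spl p add z sm vs" using Cons by auto
    have "v = add (sm 0 u) v" using vs_zsm[OF V] Cons.prems p vs_lid[OF V] spl_sub[of vs] w by auto
    then show ?thesis using w p by fastforce
  qed
qed

lemma spl_add: "set vs \<subseteq> V \<Longrightarrow> x \<in> spl p add z sm vs \<Longrightarrow> y \<in> spl p add z sm vs \<Longrightarrow> add x y \<in> spl p add z sm vs"
proof (induction vs arbitrary: x y)
  case Nil then show ?case using vs_lid[OF V vs_z[OF V]] by simp
next
  case (Cons v vs)
  from Cons.prems obtain a w b w' where x: "x = add (sm a v) w" "a<p" "w \<in> spl p add z sm vs"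
    and y: "y = add (sm b v) w'" "b<p" "w' \<in> spl p add z sm vs" by auto
  have vV: "v \<in> V" and sV: "spl p add z sm vs \<subseteq> V" using Cons.prems spl_sub by auto
  have "add x y = add (add (sm a v) (sm b v)) (add w w')"
    using x y vs_swap[OF V] vV sV vs_sm[OF V] by (metis subsetD)
  also have "\<dots> = add (sm ((a+b) mod p) v) (add w w')" using vs_addsm[OF V x(2) y(2) vV] by simp
  finally show ?case using Cons x y p by fastforce
qed

lemma spl_sm: "set vs \<subseteq> V \<Longrightarrow> c < p \<Longrightarrow> x \<in> spl p add z sm vs \<Longrightarrow> sm c x \<in> spl p add z sm vs"
proof (induction vs arbitrary: x)
  case Nil then show ?case using vs_smz[OF V] by simp
next
  case (Cons v vs)
  from Cons.prems obtain a w where x: "x = add (sm a v) w" "a<p" "w \<in> spl p add z sm vs" by auto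
  have vV: "v \<in> V" and sV: "spl p add z sm vs \<subseteq> V" using Cons.prems spl_sub by auto
  have "sm c x = add (sm c (sm a v)) (sm c w)" using x vs_smadd[OF V Cons.prems(2)] vV sV vs_sm[OF V] by blast
  also have "\<dots> = add (sm ((c*a) mod p) v) (sm c w)" using vs_mulsm[OF V Cons.prems(2) x(2) vV] by simp
  finally show ?case using Cons x p by fastforce
qed

lemma spl_least: assumes "set vs \<subseteq> T" "T \<subseteq> V" "z \<in> T" "\<forall>x\<in>T. \<forall>y\<in>T. add x y \<in> T" "\<forall>a<p. \<forall>x\<in>T. sm a x \<in> T"
  shows "spl p add z sm vs \<subseteq> T"
  using assms by (induction vs) auto

end

lemma spl_map:
  assumes V: "vspace p V add z sm" and V': "vspace p V' add z' sm"
    and L: "\<forall>x\<in>V. \<forall>y\<in>V. L (add x y) = add (L x) (L y)" "\<forall>a<p. \<forall>x\<in>V. L (sm a x) = sm a (L x)"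
    and Lz: "L z = z'" and vs: "set vs \<subseteq> V" and p: "1<p"
  shows "L ` spl p add z sm vs \<subseteq> spl p add z' sm (map L vs)"
  using vs
proof (induction vs)
  case Nil then show ?case using Lz by simp
next
  case (Cons v vs)
  have sV: "spl p add z sm vs \<subseteq> V" using spl_sub[OF V p] Cons.prems by auto
  show ?case
  proof
    fix y assume "y \<in> L ` spl p add z sm (v#vs)"
    then obtain a w where y: "y = L (add (sm a v) w)" "a<p" "w \<in> spl p add z sm vs" by auto
    have "y = add (sm a (L v)) (L w)" using y L Cons.prems sV vs_sm[OF V] by auto
    then show "y \<in> spl p add z' sm (map L (v#vs))" using Cons y by auto
  qed
qed


definition mors :: "nat \<Rightarrow> nat \<Rightarrow> nat \<Rightarrow> mat list" where
 "mors p m n = (SOME l. set l = {f. is_mor p m n f})"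

lemma mor_finite: "finite {f. is_mor p m n f}"
proof -
  let ?h = "\<lambda>(g::nat\<times>nat\<Rightarrow>nat) (i::nat) (j::nat). if i<n \<and> j<m then g (i,j) else (0::nat)"
  have "{f. is_mor p m n f} \<subseteq> ?h ` (PiE ({..<n}\<times>{..<m}) (\<lambda>_. {..<p}))"
  proof
    fix f assume "f \<in> {f. is_mor p m n f}"
    hence f: "is_mor p m n f" by simp
    define g where "g = (\<lambda>ij::nat\<times>nat. if ij \<in> {..<n}\<times>{..<m} then f (fst ij) (snd ij) else undefined)"
    have "g \<in> PiE ({..<n}\<times>{..<m}) (\<lambda>_. {..<p})" using f by (auto simp: is_mor_def g_def split: if_splits)
    moreover have "f = ?h g" using f by (auto simp: is_mor_def fun_eq_iff g_def)
    ultimately show "f \<in> ?h ` (PiE ({..<n}\<times>{..<m}) (\<lambda>_. {..<p}))" by blast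
  qed
  thus ?thesis by (rule finite_subset) (intro finite_imageI finite_PiE; simp)
qed

lemma set_mors: "set (mors p m n) = {f. is_mor p m n f}"
  using finite_list[OF mor_finite] unfolding mors_def by (rule someI_ex)

lemma mor_comp: "is_mor p l m f \<Longrightarrow> is_mor p m n g \<Longrightarrow> 0<p \<Longrightarrow> is_mor p l n (mat_comp p m g f)"
  unfolding is_mor_def mat_comp_def by auto

lemma mor_id: "1<p \<Longrightarrow> is_mor p n n (mat_id n)" unfolding is_mor_def mat_id_def by auto

lemma order_between: "(a::'x::order) \<le> h \<Longrightarrow> h \<le> b \<Longrightarrow> \<not>(a<h \<and> h<b) \<Longrightarrow> h = a \<or> h = b"
  by (auto simp: less_le)

locale vsF =
  fixes p :: nat and Fo :: "nat \<Rightarrow> 'v set" and Fa :: "nat \<Rightarrow> nat \<Rightarrow> mat \<Rightarrow> 'v \<Rightarrow> 'v"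
    and add :: "'v\<Rightarrow>'v\<Rightarrow>'v" and z :: "nat \<Rightarrow> 'v" and sm :: "nat \<Rightarrow> 'v \<Rightarrow> 'v"
  assumes vs: "vs_presheaf p Fo Fa add z sm" and p1: "1 < p"
begin

lemma V: "vspace p (Fo n) add (z n) sm" using vs unfolding vs_presheaf_def by blast
lemma p0: "0 < p" using p1 by simp
lemma Fa_in: "is_mor p m n f \<Longrightarrow> x \<in> Fo n \<Longrightarrow> Fa m n f x \<in> Fo m"
  using vs unfolding vs_presheaf_def presheaf_def by blast
lemma Fa_id: "x \<in> Fo n \<Longrightarrow> Fa n n (mat_id n) x = x"
  using vs unfolding vs_presheaf_def presheaf_def by blast
lemma Fa_comp: "is_mor p l m f \<Longrightarrow> is_mor p m n g \<Longrightarrow> x \<in> Fo n \<Longrightarrow> Fa l n (mat_comp p m g f) x = Fa l m f (Fa m n g x)"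
  using vs unfolding vs_presheaf_def presheaf_def by blast
lemma Fa_add: "is_mor p m n f \<Longrightarrow> x \<in> Fo n \<Longrightarrow> y \<in> Fo n \<Longrightarrow> Fa m n f (add x y) = add (Fa m n f x) (Fa m n f y)"
  using vs unfolding vs_presheaf_def by blast
lemma Fa_sm: "is_mor p m n f \<Longrightarrow> a < p \<Longrightarrow> x \<in> Fo n \<Longrightarrow> Fa m n f (sm a x) = sm a (Fa m n f x)"
  using vs unfolding vs_presheaf_def by blast
lemma Fa_z: assumes f: "is_mor p m n f" shows "Fa m n f (z n) = z m"
proof -
  have zn: "z n \<in> Fo n" using vs_z[OF V] .
  have "Fa m n f (z n) = Fa m n f (add (z n) (z n))" using vs_lid[OF V zn] by simp
  also have "\<dots> = add (Fa m n f (z n)) (Fa m n f (z n))" using Fa_add[OF f zn zn] .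
  finally show ?thesis using vs_idem[OF V Fa_in[OF f zn]] by simp
qed

abbreviation "sub G \<equiv> subfunctor p Fo Fa add z sm G"

lemma subD: assumes "sub G"
  shows "G n \<subseteq> Fo n" "z n \<in> G n" "x\<in>G n \<Longrightarrow> y\<in>G n \<Longrightarrow> add x y \<in> G n"
    "a<p \<Longrightarrow> x\<in>G n \<Longrightarrow> sm a x \<in> G n" "is_mor p m n f \<Longrightarrow> x \<in> G n \<Longrightarrow> Fa m n f x \<in> G m"
  using assms unfolding subfunctor_def by blast+

lemma sub_inter: "sub A \<Longrightarrow> sub B \<Longrightarrow> sub (\<lambda>n. A n \<inter> B n)"
  unfolding subfunctor_def by blast

definition ssum :: "(nat \<Rightarrow> 'v set) \<Rightarrow> (nat \<Rightarrow> 'v set) \<Rightarrow> nat \<Rightarrow> 'v set" where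
  "ssum A B = (\<lambda>n. {add a b | a b. a \<in> A n \<and> b \<in> B n})"

lemma sub_sum: assumes A: "sub A" and B: "sub B" shows "sub (ssum A B)"
  unfolding subfunctor_def
proof (intro conjI allI impI ballI)
  fix n
  show "ssum A B n \<subseteq> Fo n" using subD(1)[OF A] subD(1)[OF B] vs_add[OF V] unfolding ssum_def by blast
  have "z n = add (z n) (z n)" using vs_lid[OF V vs_z[OF V]] by simp
  then show "z n \<in> ssum A B n" unfolding ssum_def using subD(2)[OF A, of n] subD(2)[OF B, of n] by blast
  fix x y assume x: "x \<in> ssum A B n" and y: "y \<in> ssum A B n"
  then obtain a b a' b' where ab: "x = add a b" "a \<in> A n" "b \<in> B n" and ab': "y = add a' b'" "a' \<in> A n" "b' \<in> B n"
    unfolding ssum_def by blast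
  have "add x y = add (add a a') (add b b')"
    using ab ab' vs_swap[OF V] subD(1)[OF A] subD(1)[OF B] by blast
  then show "add x y \<in> ssum A B n" unfolding ssum_def using ab ab' subD(3)[OF A] subD(3)[OF B] by blast
next
  fix n a x assume a: "a < p" and x: "x \<in> ssum A B n"
  then obtain u v where uv: "x = add u v" "u \<in> A n" "v \<in> B n" unfolding ssum_def by blast
  have "sm a x = add (sm a u) (sm a v)" using uv vs_smadd[OF V a] subD(1)[OF A] subD(1)[OF B] by blast
  then show "sm a x \<in> ssum A B n" unfolding ssum_def using uv a subD(4)[OF A] subD(4)[OF B] by blast
next
  fix m n f x assume h: "is_mor p m n f \<and> x \<in> ssum A B n"
  then obtain u v where uv: "x = add u v" "u \<in> A n" "v \<in> B n" unfolding ssum_def by blast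
  have "Fa m n f x = add (Fa m n f u) (Fa m n f v)" using uv h Fa_add subD(1)[OF A] subD(1)[OF B] by blast
  then show "Fa m n f x \<in> ssum A B m" unfolding ssum_def using uv h subD(5)[OF A] subD(5)[OF B] by blast
qed

lemma sum_ge1: assumes B: "sub B" and A: "A n \<subseteq> Fo n" shows "A n \<subseteq> ssum A B n"
proof
  fix a assume a: "a \<in> A n"
  have "a = add a (z n)" using vs_rid[OF V] a A by auto
  then show "a \<in> ssum A B n" unfolding ssum_def using a subD(2)[OF B] by blast
qed

lemma sum_ge2: assumes A: "sub A" and B: "B n \<subseteq> Fo n" shows "B n \<subseteq> ssum A B n"
proof
  fix a assume a: "a \<in> B n"
  have "a = add (z n) a" using vs_lid[OF V] a B by auto
  then show "a \<in> ssum A B n" unfolding ssum_def using a subD(2)[OF A] by blast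
qed

lemma sum_le: assumes C: "sub C" and "A n \<subseteq> C n" "B n \<subseteq> C n" shows "ssum A B n \<subseteq> C n"
  unfolding ssum_def using assms subD(3)[OF C] by blast

definition K :: "nat \<Rightarrow> nat \<Rightarrow> 'v set" where
  "K d n = {y \<in> Fo n. \<forall>e\<le>d. \<forall>f. is_mor p e n f \<longrightarrow> Fa e n f y = z e}"

lemma sub_K: "sub (K d)"
  unfolding subfunctor_def
proof (intro conjI allI impI ballI)
  fix n
  show "K d n \<subseteq> Fo n" unfolding K_def by blast
  show "z n \<in> K d n" unfolding K_def using Fa_z vs_z[OF V] by blast
  fix x y assume x: "x \<in> K d n" and y: "y \<in> K d n"
  show "add x y \<in> K d n" unfolding K_def
  proof (intro CollectI conjI allI impI)
    show "add x y \<in> Fo n" using x y vs_add[OF V] unfolding K_def by blast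
    fix e f assume "e \<le> d" "is_mor p e n f"
    then show "Fa e n f (add x y) = z e" using x y Fa_add vs_lid[OF V vs_z[OF V]] unfolding K_def by auto
  qed
next
  fix n a x assume a: "a < p" and x: "x \<in> K d n"
  show "sm a x \<in> K d n" unfolding K_def
  proof (intro CollectI conjI allI impI)
    show "sm a x \<in> Fo n" using x a vs_sm[OF V] unfolding K_def by blast
    fix e f assume "e \<le> d" "is_mor p e n f"
    then show "Fa e n f (sm a x) = z e" using x a Fa_sm vs_smz[OF V] unfolding K_def by auto
  qed
next
  fix m n g x assume h: "is_mor p m n g \<and> x \<in> K d n"
  show "Fa m n g x \<in> K d m" unfolding K_def
  proof (intro CollectI conjI allI impI)
    show "Fa m n g x \<in> Fo m" using h Fa_in unfolding K_def by blast
    fix e f assume e: "e \<le> d" and f: "is_mor p e m f"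
    have "Fa e m f (Fa m n g x) = Fa e n (mat_comp p m g f) x" using Fa_comp f h unfolding K_def by auto
    also have "\<dots> = z e" using h e mor_comp[OF f _ p0] unfolding K_def by blast
    finally show "Fa e m f (Fa m n g x) = z e" .
  qed
qed

lemma K_mono: "d \<le> d' \<Longrightarrow> K d' n \<subseteq> K d n" unfolding K_def by auto

lemma K_zero: assumes "n \<le> d" "y \<in> K d n" shows "y = z n"
proof -
  have "Fa n n (mat_id n) y = z n" using assms mor_id[OF p1] unfolding K_def by blast
  then show ?thesis using Fa_id assms unfolding K_def by auto
qed

definition S :: "'v \<Rightarrow> nat \<Rightarrow> nat \<Rightarrow> 'v set" where
  "S x n0 W = spl p add (z W) sm (map (\<lambda>f. Fa W n0 f x) (mors p W n0))"

lemma S_list: "x \<in> Fo n0 \<Longrightarrow> set (map (\<lambda>f. Fa W n0 f x) (mors p W n0)) \<subseteq> Fo W"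
  using Fa_in by (auto simp: set_mors)

lemma S_finite: "finite (S x n0 W)" unfolding S_def by (rule spl_finite)

lemma S_x: "x \<in> Fo n0 \<Longrightarrow> x \<in> S x n0 n0"
  unfolding S_def
  apply (rule spl_mem[OF V p1 S_list], assumption)
  using mor_id[OF p1] Fa_id[of x n0] by (auto simp: set_mors intro!: image_eqI[where x="mat_id n0"])

lemma S_le: assumes G: "sub G" and x: "x \<in> G n0" shows "S x n0 W \<subseteq> G W"
  unfolding S_def
  apply (rule spl_least[OF V p1])
  using subD[OF G] x by (auto simp: set_mors)

lemma sub_S: assumes x: "x \<in> Fo n0" shows "sub (S x n0)"
  unfolding subfunctor_def
proof (intro conjI allI impI ballI)
  fix n
  show "S x n0 n \<subseteq> Fo n" unfolding S_def using spl_sub[OF V p1 S_list[OF x]] .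
  show "z n \<in> S x n0 n" unfolding S_def using spl_z[OF V p1 S_list[OF x]] .
  fix u v assume "u \<in> S x n0 n" "v \<in> S x n0 n"
  then show "add u v \<in> S x n0 n" unfolding S_def using spl_add[OF V p1 S_list[OF x]] by blast
next
  fix n a u assume "a < p" "u \<in> S x n0 n"
  then show "sm a u \<in> S x n0 n" unfolding S_def using spl_sm[OF V p1 S_list[OF x]] by blast
next
  fix m n g u assume h: "is_mor p m n g \<and> u \<in> S x n0 n"
  have g: "is_mor p m n g" using h by blast
  have "Fa m n g ` S x n0 n \<subseteq> spl p add (z m) sm (map (Fa m n g) (map (\<lambda>f. Fa n n0 f x) (mors p n n0)))"
    unfolding S_def
    apply (rule spl_map[where V="Fo n" and V'="Fo m" and z="z n" and z'="z m"])
    using V Fa_add[OF g] Fa_sm[OF g] Fa_z[OF g] S_list[OF x, of n] p1 by auto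
  also have "\<dots> \<subseteq> S x n0 m"
  proof (rule spl_least[OF V p1])
    show "set (map (Fa m n g) (map (\<lambda>f. Fa n n0 f x) (mors p n n0))) \<subseteq> S x n0 m"
    proof
      fix w assume "w \<in> set (map (Fa m n g) (map (\<lambda>f. Fa n n0 f x) (mors p n n0)))"
      then obtain f where f: "is_mor p n n0 f" and w: "w = Fa m n g (Fa n n0 f x)" by (auto simp: set_mors)
      have "w = Fa m n0 (mat_comp p n f g) x" using Fa_comp[OF g f x] w by simp
      moreover have "is_mor p m n0 (mat_comp p n f g)" using mor_comp[OF g f p0] .
      ultimately show "w \<in> S x n0 m" unfolding S_def
        by (intro spl_mem[OF V p1 S_list[OF x]]) (auto simp: set_mors)
    qed
    show "S x n0 m \<subseteq> Fo m" unfolding S_def using spl_sub[OF V p1 S_list[OF x]] .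
    show "z m \<in> S x n0 m" unfolding S_def using spl_z[OF V p1 S_list[OF x]] .
    show "\<forall>u\<in>S x n0 m. \<forall>v\<in>S x n0 m. add u v \<in> S x n0 m" unfolding S_def using spl_add[OF V p1 S_list[OF x]] by blast
    show "\<forall>a<p. \<forall>u\<in>S x n0 m. sm a u \<in> S x n0 m" unfolding S_def using spl_sm[OF V p1 S_list[OF x]] by blast
  qed
  finally show "Fa m n g u \<in> S x n0 m" using h by blast
qed

end

context vsF begin

lemma fin_series:
  assumes ne: "Gs \<noteq> []" and sub: "\<forall>G\<in>set Gs. sub G" and hd: "hd Gs = (\<lambda>n. {z n})"
    and st: "\<forall>i. Suc i < length Gs \<longrightarrow> Gs!i < Gs!Suc i \<and> \<not>(\<exists>H. sub H \<and> Gs!i < H \<and> H < Gs!Suc i)"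
  shows "i < length Gs \<Longrightarrow> finite ((Gs!i) n)"
proof (induction i arbitrary: n)
  case 0 then show ?case using hd ne by (simp add: hd_conv_nth[symmetric])
next
  case (Suc i)
  let ?G = "Gs!i" and ?G' = "Gs!Suc i"
  have G: "sub ?G" and G': "sub ?G'" using sub Suc.prems by auto
  have lt: "?G < ?G'" and smp: "\<not>(\<exists>H. sub H \<and> ?G < H \<and> H < ?G')" using st Suc.prems by auto
  have le: "?G n \<subseteq> ?G' n" for n using lt by (auto simp: less_le le_fun_def)
  show ?case
  proof (cases "?G' n \<subseteq> ?G n")
    case True then have "?G' n = ?G n" using le by auto
    then show ?thesis using Suc.IH Suc.prems by simp
  next
    case False
    then obtain x where x: "x \<in> ?G' n" "x \<notin> ?G n" by auto
    have xF: "x \<in> Fo n" using subD(1)[OF G'] x by auto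
    define H where "H = ssum ?G (S x n)"
    have H: "sub H" unfolding H_def using sub_sum[OF G sub_S[OF xF]] .
    have GH: "?G \<le> H" unfolding H_def le_fun_def using sum_ge1[where A="Gs!i", OF sub_S[OF xF] subD(1)[OF G]] by blast
    have HG': "H \<le> ?G'" unfolding H_def le_fun_def by (intro allI sum_le[OF G'] le S_le[OF G' x(1)])
    have "x \<in> H n" unfolding H_def using sum_ge2[where B="S x n", OF G subD(1)[OF sub_S[OF xF]]] S_x[OF xF] by blast
    then have "H \<noteq> ?G" using x by auto
    then have "H = ?G'" using order_between[OF GH HG'] smp H by blast
    then have "?G' n = ssum ?G (S x n) n" unfolding H_def by simp
    also have "\<dots> \<subseteq> (\<lambda>(a,b). add a b) ` (?G n \<times> S x n n)" unfolding ssum_def by auto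
    finally show ?thesis using Suc.IH Suc.prems S_finite by (meson Suc_lessD finite_SigmaI finite_imageI finite_subset)
  qed
qed

lemma ker_series:
  assumes ne: "Gs \<noteq> []" and sub: "\<forall>G\<in>set Gs. sub G" and hd: "hd Gs = (\<lambda>n. {z n})"
    and st: "\<forall>i. Suc i < length Gs \<longrightarrow> Gs!i < Gs!Suc i \<and> \<not>(\<exists>H. sub H \<and> Gs!i < H \<and> H < Gs!Suc i)"
  shows "i < length Gs \<Longrightarrow> \<exists>d. \<forall>n. (Gs!i) n \<inter> K d n \<subseteq> {z n}"
proof (induction i)
  case 0 then show ?case using hd ne by (simp add: hd_conv_nth[symmetric])
next
  case (Suc i)
  let ?G = "Gs!i" and ?G' = "Gs!Suc i"
  obtain d0 where d0: "\<forall>n. ?G n \<inter> K d0 n \<subseteq> {z n}" using Suc by auto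
  have G: "sub ?G" and G': "sub ?G'" using sub Suc.prems by auto
  have lt: "?G < ?G'" and smp: "\<not>(\<exists>H. sub H \<and> ?G < H \<and> H < ?G')" using st Suc.prems by auto
  have le: "?G n \<subseteq> ?G' n" for n using lt by (auto simp: less_le le_fun_def)
  have "?G \<noteq> ?G'" using lt by auto
  then obtain n where "?G n \<noteq> ?G' n" by (auto simp: fun_eq_iff)
  then obtain x where x: "x \<in> ?G' n" "x \<notin> ?G n" using le[of n] by auto
  define H where "H = ssum ?G (\<lambda>W. ?G' W \<inter> K n W)"
  have B: "sub (\<lambda>W. ?G' W \<inter> K n W)" using sub_inter[OF G' sub_K] .
  have H: "sub H" unfolding H_def using sub_sum[OF G B] .
  have GH: "?G \<le> H" unfolding H_def le_fun_def using sum_ge1[where A="Gs!i", OF B subD(1)[OF G]] by blast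
  have HG': "H \<le> ?G'" unfolding H_def le_fun_def by (intro allI sum_le[OF G'] le) auto
  have "x \<notin> H n"
  proof
    assume "x \<in> H n"
    then obtain g k where gk: "x = add g k" "g \<in> ?G n" "k \<in> K n n" unfolding H_def ssum_def by blast
    have "k = z n" using K_zero[OF _ gk(3)] by simp
    then have "x = g" using gk vs_rid[OF V] subD(1)[OF G] by auto
    then show False using x gk by simp
  qed
  then have "H \<noteq> ?G'" using x by auto
  then have HG: "H = ?G" using order_between[OF GH HG'] smp H by blast
  show ?case
  proof (intro exI allI)
    fix m
    show "?G' m \<inter> K (max n d0) m \<subseteq> {z m}"
    proof
      fix y assume y: "y \<in> ?G' m \<inter> K (max n d0) m"
      then have yn: "y \<in> K n m" and yd: "y \<in> K d0 m" using K_mono[of n "max n d0" m] K_mono[of d0 "max n d0" m] by auto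
      have "y \<in> H m" unfolding H_def
        using sum_ge2[OF G, of "\<lambda>W. ?G' W \<inter> K n W" m] subD(1)[OF G'] y yn by blast
      then have "y \<in> ?G m" using HG by simp
      then show "y \<in> {z m}" using d0 yd by blast
    qed
  qed
qed

end

theorem corollary3p9:
  fixes p :: nat
    and Xo :: "nat \<Rightarrow> 'a set" and Xa :: "nat \<Rightarrow> nat \<Rightarrow> mat \<Rightarrow> 'a \<Rightarrow> 'a"
    and Yo :: "nat \<Rightarrow> 'b set" and Ya :: "nat \<Rightarrow> nat \<Rightarrow> mat \<Rightarrow> 'b \<Rightarrow> 'b"
  assumes "prime p"
    and "presheaf p Xo Xa" and "presheaf p Yo Ya"
    and "\<forall>n. finite (Xo n)"
    and "finite_presheaf TYPE('v) p Yo Ya"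
  shows "finite (Hom p Xo Xa Yo Ya)"
proof -
  from assms(5) obtain Fo :: "nat \<Rightarrow> 'v set" and Fa add z sm \<iota> where
    vsp: "vs_presheaf p Fo Fa add z sm" and cs: "has_comp_series p Fo Fa add z sm"
    and nt: "nat_trans p Yo Ya Fo Fa \<iota>" and inj: "\<forall>n. inj_on (\<iota> n) (Yo n)"
    unfolding finite_presheaf_def by blast
  have p1: "1 < p" using assms(1) prime_gt_1_nat by blast
  interpret vsF p Fo Fa add z sm using vsp p1 by unfold_locales
  from cs obtain Gs where ne: "Gs \<noteq> []" and sub: "\<forall>G\<in>set Gs. sub G" and hd: "hd Gs = (\<lambda>n. {z n})"
    and lastG: "last Gs = Fo"
    and st: "\<forall>i. Suc i < length Gs \<longrightarrow> Gs!i < Gs!Suc i \<and> \<not>(\<exists>H. sub H \<and> Gs!i < H \<and> H < Gs!Suc i)"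
    unfolding has_comp_series_def by blast
  define k where "k = length Gs - 1"
  have kl: "k < length Gs" using ne unfolding k_def by simp
  have lastk: "Gs ! k = Fo" using lastG ne last_conv_nth unfolding k_def by metis
  obtain D where D: "\<forall>n. Fo n \<inter> K D n \<subseteq> {z n}" using ker_series[OF ne sub hd st kl] lastk by auto
  have finF: "finite (Fo n)" for n using fin_series[OF ne sub hd st kl] lastk by simp
  have \<iota>in: "\<And>n y. y \<in> Yo n \<Longrightarrow> \<iota> n y \<in> Fo n" using nt unfolding nat_trans_def by blast
  have \<iota>nat: "\<And>m n f y. is_mor p m n f \<Longrightarrow> y \<in> Yo n \<Longrightarrow> \<iota> m (Ya m n f y) = Fa m n f (\<iota> n y)"
    using nt unfolding nat_trans_def by blast
  have finY: "finite (Yo n)" for n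
  proof -
    have "\<iota> n ` Yo n \<subseteq> Fo n" using \<iota>in by auto
    then have "finite (\<iota> n ` Yo n)" using finF finite_subset by blast
    then show ?thesis using finite_imageD inj by blast
  qed
  define r where "r = (\<lambda>\<eta>::nat \<Rightarrow> 'a \<Rightarrow> 'b. (\<lambda>e. if e \<in> {..D} then \<eta> e else undefined))"
  have img: "r ` Hom p Xo Xa Yo Ya \<subseteq> PiE {..D} (\<lambda>e. PiE (Xo e) (\<lambda>_. Yo e))"
  proof
    fix g assume "g \<in> r ` Hom p Xo Xa Yo Ya"
    then obtain \<eta> where \<eta>: "\<eta> \<in> Hom p Xo Xa Yo Ya" and g: "g = r \<eta>" by blast
    then show "g \<in> PiE {..D} (\<lambda>e. PiE (Xo e) (\<lambda>_. Yo e))"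
      unfolding Hom_def nat_trans_def r_def by (auto simp: PiE_iff extensional_def)
  qed
  have injr: "inj_on r (Hom p Xo Xa Yo Ya)"
  proof (rule inj_onI)
    fix \<eta>1 \<eta>2 assume h1: "\<eta>1 \<in> Hom p Xo Xa Yo Ya" and h2: "\<eta>2 \<in> Hom p Xo Xa Yo Ya" and eq: "r \<eta>1 = r \<eta>2"
    have eqD: "\<eta>1 e = \<eta>2 e" if "e \<le> D" for e using fun_cong[OF eq, of e] that unfolding r_def by simp
    have n1: "nat_trans p Xo Xa Yo Ya \<eta>1" and n2: "nat_trans p Xo Xa Yo Ya \<eta>2"
      and u1: "\<forall>n x. x \<notin> Xo n \<longrightarrow> \<eta>1 n x = undefined" and u2: "\<forall>n x. x \<notin> Xo n \<longrightarrow> \<eta>2 n x = undefined"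
      using h1 h2 unfolding Hom_def by auto
    show "\<eta>1 = \<eta>2"
    proof (intro ext)
      fix n x
      show "\<eta>1 n x = \<eta>2 n x"
      proof (cases "x \<in> Xo n")
        case False then show ?thesis using u1 u2 by simp
      next
        case True
        have y1: "\<eta>1 n x \<in> Yo n" and y2: "\<eta>2 n x \<in> Yo n" using n1 n2 True unfolding nat_trans_def by auto
        define u where "u = \<iota> n (\<eta>1 n x)"
        define v where "v = \<iota> n (\<eta>2 n x)"
        have uF: "u \<in> Fo n" and vF: "v \<in> Fo n" using \<iota>in y1 y2 unfolding u_def v_def by auto
        obtain w where w: "w \<in> Fo n" "add v w = z n" using vs_inv[OF V vF] by blast
        have key: "Fa e n f u = Fa e n f v" if e: "e \<le> D" and f: "is_mor p e n f" for e f
        proof -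
          have "Fa e n f u = \<iota> e (Ya e n f (\<eta>1 n x))" using \<iota>nat[OF f y1] unfolding u_def by simp
          also have "\<dots> = \<iota> e (\<eta>1 e (Xa e n f x))" using n1 f True unfolding nat_trans_def by simp
          also have "\<dots> = \<iota> e (\<eta>2 e (Xa e n f x))" using eqD[OF e] by simp
          also have "\<dots> = \<iota> e (Ya e n f (\<eta>2 n x))" using n2 f True unfolding nat_trans_def by simp
          also have "\<dots> = Fa e n f v" using \<iota>nat[OF f y2] unfolding v_def by simp
          finally show ?thesis .
        qed
        have "add u w \<in> K D n" unfolding K_def
        proof (intro CollectI conjI allI impI)
          show "add u w \<in> Fo n" using vs_add[OF V uF w(1)] .
          fix e f assume e: "e \<le> D" and f: "is_mor p e n f"
          have "Fa e n f (add u w) = add (Fa e n f u) (Fa e n f w)" using Fa_add[OF f uF w(1)] .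
          also have "\<dots> = add (Fa e n f v) (Fa e n f w)" using key[OF e f] by simp
          also have "\<dots> = Fa e n f (add v w)" using Fa_add[OF f vF w(1)] by simp
          also have "\<dots> = z e" using w(2) Fa_z[OF f] by simp
          finally show "Fa e n f (add u w) = z e" .
        qed
        then have "add u w = z n" using D vs_add[OF V uF w(1)] by blast
        then have "u = v" using vs_cancel[OF V uF vF w(1) w(2)] by simp
        then show ?thesis using inj y1 y2 unfolding u_def v_def inj_on_def by blast
      qed
    qed
  qed
  have "finite (PiE {..D} (\<lambda>e. PiE (Xo e) (\<lambda>_. Yo e)))"
    using assms(4) finY by (intro finite_PiE) auto
  then have "finite (r ` Hom p Xo Xa Yo Ya)" using img finite_subset by blast
  then show ?thesis using finite_imageD injr by blast
qed

end
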